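(* Let $\phi_k$, $k\in\{2,3,\dots\}$, be networks satisfying, for all $k\in\{2,3,\dots\}$, $\mathcal I(\phi_k)=\mathcal O(\mathbf P_2(\phi_2,\mathfrak I_{k-1}))$, $\phi_{k+1}=\phi_k\bullet\mathbf P_2(\phi_2,\mathfrak I_{k-1})$, and $$\phi_2=\left(\left(\begin{pmatrix}1&-1\\0&1\\0&-1\end{pmatrix},\begin{pmatrix}0\\0\\0\end{pmatrix}\right),\Bigl(\begin{pmatrix}1&1&-1\end{pmatrix},0\Bigr)\right)\in(\mathbb R^{3\times2}\times\mathbb R^3)\times(\mathbb R^{1\times3}\times\mathbb R).$$ Let $d\in\mathbb N$, $L\in\mathbb R$, let $D\subseteq\mathbb R^d$ be a set, let $f\colon D\to\mathbb R$ satisfy $|f(x)-f(y)|\le L\sum_{i=1}^d|x_i-y_i|$ for all $x,y\in D$, let $\mathcal M\subseteq D$ satisfy $|\mathcal M|\in\{2,3,\dots\}$, let $m\colon\{1,\dots,|\mathcal M|\}\to\mathcal M$ be bijective, let $W_1\in\mathbb R^{(2d)\times d}$ be the matrix whose rows $2i-1$ and $2i$ are $e_i^T$ and $-e_i^T$ ($i=1,\dots,d$, $e_i$ the standard unit vectors), let $W_2=(-L,-L,\dots,-L)\in\mathbb R^{1\times(2d)}$, for $z=(z_1,\dots,z_d)\in\mathcal M$ let $B_z=(-z_1,z_1,-z_2,z_2,\dots,-z_d,z_d)^T\in\mathbb R^{2d}$, let $\mathcal W_1\in\mathbb R^{(2d|\mathcal M|)\times d}$ be $W_1$ stacked vertically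 $|\mathcal M|$ times, $\mathcal B_1=(B_{m(1)};B_{m(2)};\dots;B_{m(|\mathcal M|)})\in\mathbb R^{2d|\mathcal M|}$, $\mathcal W_2\in\mathbb R^{|\mathcal M|\times(2d|\mathcal M|)}$ the block-diagonal matrix with $|\mathcal M|$ diagonal blocks equal to $W_2$, $\mathcal B_2=(f(m(1)),\dots,f(m(|\mathcal M|)))^T$, and let $\Phi=\phi_{|\mathcal M|}\bullet((\mathcal W_1,\mathcal B_1),(\mathcal W_2,\mathcal B_2))$. Then (i) $\mathcal D(\Phi)=(d,2d|\mathcal M|,2|\mathcal M|-1,2|\mathcal M|-3,\dots,3,1)\in\mathbb N^{|\mathcal M|+2}$; (ii) $\|\mathcal T(\Phi)\|_\infty\le\max\{1,L,\sup_{z\in\mathcal M}\|z\|_\infty,2\sup_{z\in\mathcal M}|f(z)|\}$; (iii) $\sup_{x\in D}|f(x)-(\mathcal R_{\mathfrak r}(\Phi))(x)|\le 2L\sup_{x\in D}\inf_{y\in\mathcal M}\sum_{i=1}^d|x_i-y_i|$.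
   Context: A network is a tuple $\Phi=((W_1,B_1),\dots,(W_L,B_L))$ with $L\in\mathbb N$, $l_0,\dots,l_L\in\mathbb N$, $W_k\in\mathbb R^{l_k\times l_{k-1}}$, $B_k\in\mathbb R^{l_k}$; its length is $L$, its dimensions $\mathcal D(\Phi)=(l_0,\dots,l_L)$, input dimension $\mathcal I(\Phi)=l_0$, output dimension $\mathcal O(\Phi)=l_L$. Its ReLU realization $\mathcal R_{\mathfrak r}(\Phi)\colon\mathbb R^{l_0}\to\mathbb R^{l_L}$ is $x_0\mapsto W_Lx_{L-1}+B_L$ where $x_k=\mathfrak R(W_kx_{k-1}+B_k)$ for $k=1,\dots,L-1$ and $\mathfrak R$ applies $y\mapsto\max\{y,0\}$ componentwise. Its vectorization $\mathcal T(\Phi)\in\mathbb R^{\sum_kl_k(l_{k-1}+1)}$ is the concatenation over $k=1,\dots,L$ of the entries of $W_k$ listed row by row followed by the entries of $B_k$; $\|\cdot\|_\infty$ is the maximum norm. Composition: if $\Phi_1=((W_1,B_1),\dots,(W_L,B_L))$, $\Phi_2=((\mathfrak W_1,\mathfrak B_1),\dots,(\mathfrak W_{\mathfrak L},\mathfrak B_{\mathfrak L}))$ with $\mathcal I(\Phi_1)=\mathcal O(\Phi_2)$, then $\Phi_1\bullet\Phi_2=((\mathfrak W_1,\mathfrak B_1),\dots,(\mathfrak W_{\mathfrak L-1},\mathfrak B_{\mathfrak L-1}),(W_1\mathfrak W_{\mathfrak L},W_1\mathfrak B_{\mathfrak L}+B_1),(W_2,B_2),\dots,(W_L,B_L))$.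 Parallelization: for networks $\Phi_1,\dots,\Phi_n$ of the same length $L$ with $\Phi_i=((W_{i,1},B_{i,1}),\dots,(W_{i,L},B_{i,L}))$, $\mathbf P_n(\Phi_1,\dots,\Phi_n)=((\mathrm{diag}(W_{1,k},\dots,W_{n,k}),(B_{1,k};\dots;B_{n,k})))_{k=1,\dots,L}$ (block-diagonal weights, stacked biases). Identity networks: $\mathfrak I_1=\bigl(((1,-1)^T,(0,0)^T),((1\ \ -1),0)\bigr)$ and $\mathfrak I_d=\mathbf P_d(\mathfrak I_1,\dots,\mathfrak I_1)$ for $d\in\mathbb N$. *)

theory Defs
  imports Complex_Main "HOL-Library.Extended_Real"
begin

text \<open>Matrices are lists of rows, vectors are lists. A network is a list of layers (W,B).\<close>

type_synonym vec = "real list"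
type_synonym mat = "real list list"
type_synonym net = "(mat \<times> vec) list"

definition ncols :: "mat \<Rightarrow> nat" where
  "ncols A = (if A = [] then 0 else length (hd A))"

definition mat_vec :: "mat \<Rightarrow> vec \<Rightarrow> vec" where
  "mat_vec W x = map (\<lambda>r. sum_list (map2 (*) r x)) W"

definition mat_mult :: "mat \<Rightarrow> mat \<Rightarrow> mat" where
  "mat_mult A B = map (\<lambda>r. map (\<lambda>c. sum_list (map2 (*) r c)) (transpose B)) A"

definition vadd :: "vec \<Rightarrow> vec \<Rightarrow> vec" where
  "vadd x y = map2 (+) x y"

definition relu :: "real \<Rightarrow> real" where
  "relu y = max y 0"

definition net_dims :: "net \<Rightarrow> nat list" where
  "net_dims \<Phi> = ncols (fst (hd \<Phi>)) # map (\<lambda>(W,B). length B) \<Phi>"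

definition net_in :: "net \<Rightarrow> nat" where
  "net_in \<Phi> = hd (net_dims \<Phi>)"

definition net_out :: "net \<Rightarrow> nat" where
  "net_out \<Phi> = last (net_dims \<Phi>)"

definition valid_net :: "net \<Rightarrow> bool" where
  "valid_net \<Phi> \<longleftrightarrow> \<Phi> \<noteq> [] \<and> (\<forall>l\<in>set (net_dims \<Phi>). l \<ge> 1) \<and>
     (\<forall>k<length \<Phi>. length (fst (\<Phi>!k)) = net_dims \<Phi> ! (k+1) \<and>
        (\<forall>r\<in>set (fst (\<Phi>!k)). length r = net_dims \<Phi> ! k))"

fun realize :: "net \<Rightarrow> vec \<Rightarrow> vec" where
  "realize [] x = x"
| "realize [(W,B)] x = vadd (mat_vec W x) B"
| "realize ((W,B) # \<Phi>) x = realize \<Phi> (map relu (vadd (mat_vec W x) B))"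

definition vectorize :: "net \<Rightarrow> vec" where
  "vectorize \<Phi> = concat (map (\<lambda>(W,B). concat W @ B) \<Phi>)"

definition maxnorm :: "vec \<Rightarrow> real" where
  "maxnorm v = Max (insert 0 (abs ` set v))"

definition ncomp :: "net \<Rightarrow> net \<Rightarrow> net" where
  "ncomp \<Phi>1 \<Phi>2 = butlast \<Phi>2 @
     [(mat_mult (fst (hd \<Phi>1)) (fst (last \<Phi>2)),
       vadd (mat_vec (fst (hd \<Phi>1)) (snd (last \<Phi>2))) (snd (hd \<Phi>1)))] @ tl \<Phi>1"

fun blockdiag :: "mat list \<Rightarrow> mat" where
  "blockdiag [] = []"
| "blockdiag (A # As) =
     map (\<lambda>r. r @ replicate (sum_list (map ncols As)) 0) A @
     map (\<lambda>r. replicate (ncols A) 0 @ r) (blockdiag As)"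

definition par :: "net list \<Rightarrow> net" where
  "par \<Phi>s = map (\<lambda>k. (blockdiag (map (\<lambda>\<Phi>. fst (\<Phi>!k)) \<Phi>s), concat (map (\<lambda>\<Phi>. snd (\<Phi>!k)) \<Phi>s)))
              [0..<length (hd \<Phi>s)]"

definition id1 :: net where
  "id1 = [([[1],[-1]], [0,0]), ([[1,-1]], [0])]"

definition idnet :: "nat \<Rightarrow> net" where
  "idnet d = par (replicate d id1)"

definition phi2 :: net where
  "phi2 = [([[1,-1],[0,1],[0,-1]], [0,0,0]), ([[1,1,-1]], [0])]"

text \<open>the l^1 distance \<Sum>_{i=1}^d |x_i - y_i| (coordinates indexed from 0)\<close>
definition dist1 :: "nat \<Rightarrow> vec \<Rightarrow> vec \<Rightarrow> real" where
  "dist1 d x y = (\<Sum>i<d. \<bar>x!i - y!i\<bar>)"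

definition unitv :: "nat \<Rightarrow> nat \<Rightarrow> vec" where
  "unitv d i = map (\<lambda>j. if j = i then 1 else 0) [0..<d]"

definition W1 :: "nat \<Rightarrow> mat" where
  "W1 d = concat (map (\<lambda>i. [unitv d i, map uminus (unitv d i)]) [0..<d])"

definition W2 :: "nat \<Rightarrow> real \<Rightarrow> mat" where
  "W2 d L = [replicate (2*d) (-L)]"

definition Bz :: "nat \<Rightarrow> vec \<Rightarrow> vec" where
  "Bz d z = concat (map (\<lambda>i. [-(z!i), z!i]) [0..<d])"

end

theory Submission
  imports Defs
begin


definition mkm :: "nat \<Rightarrow> nat \<Rightarrow> (nat \<Rightarrow> nat \<Rightarrow> real) \<Rightarrow> mat" where
  "mkm a b F = map (\<lambda>i. map (\<lambda>j. F i j) [0..<b]) [0..<a]"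

lemma mkm_cong: "(\<And>i j. i < a \<Longrightarrow> j < b \<Longrightarrow> F i j = G i j) \<Longrightarrow> mkm a b F = mkm a b G"
  unfolding mkm_def by (auto intro!: map_cong)

lemma mkm_cong2: "a = a' \<Longrightarrow> b = b' \<Longrightarrow> (\<And>i j. i < a \<Longrightarrow> j < b \<Longrightarrow> F i j = G i j) \<Longrightarrow> mkm a b F = mkm a' b' G"
  using mkm_cong by blast

lemma length_mkm[simp]: "length (mkm a b F) = a" by (simp add: mkm_def)
lemma ncols_mkm[simp]: "a > 0 \<Longrightarrow> ncols (mkm a b F) = b"
  by (simp add: mkm_def ncols_def hd_map)
lemma nth_mkm[simp]: "i < a \<Longrightarrow> mkm a b F ! i = map (F i) [0..<b]"
  by (simp add: mkm_def)

lemma mkm_eqI: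
  assumes "length X = a" "\<And>i. i < a \<Longrightarrow> length (X!i) = b"
    "\<And>i j. i < a \<Longrightarrow> j < b \<Longrightarrow> X!i!j = F i j"
  shows "X = mkm a b F"
  by (rule nth_equalityI) (auto simp: assms intro!: nth_equalityI)

lemma length_transpose_uniform:
  "xs \<noteq> [] \<Longrightarrow> (\<forall>r\<in>set xs. length r = c) \<Longrightarrow> length (transpose xs) = c"
proof -
  have "(\<forall>r\<in>set xs. length r = c) \<Longrightarrow> foldr (\<lambda>xs. max (length xs)) xs 0 = (if xs = [] then 0 else c)"
    by (induct xs) auto
  then show "xs \<noteq> [] \<Longrightarrow> (\<forall>r\<in>set xs. length r = c) \<Longrightarrow> length (transpose xs) = c"
    by (simp add: length_transpose)
qed

lemma transpose_mkm: "b > 0 \<Longrightarrow> transpose (mkm b c G) = mkm c b (\<lambda>i j. G j i)"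
proof -
  assume b: "b > 0"
  have len: "length (transpose (mkm b c G)) = c"
    using b by (intro length_transpose_uniform) (auto simp: mkm_def)
  show ?thesis
    apply (rule mkm_eqI)
    using len apply simp
    using len b apply (simp add: nth_transpose mkm_def filter_map o_def)
    using len b apply (simp add: nth_transpose mkm_def filter_map o_def)
    done
qed

lemma sum_list_map2_upt:
  "length x = b \<Longrightarrow> sum_list (map2 (*) (map g [0..<b]) x) = (\<Sum>k<b. g k * x!k)"
proof -
  assume "length x = b"
  then have "zip (map g [0..<b]) x = map (\<lambda>k. (g k, x!k)) [0..<b]"
    by (intro nth_equalityI) auto
  then show ?thesis
    by (simp add: sum_set_upt_conv_sum_list_nat[symmetric] atLeast0LessThan o_def)
qed

lemma mat_vec_mkm: "length x = b \<Longrightarrow> mat_vec (mkm a b F) x = map (\<lambda>i. \<Sum>k<b. F i k * x!k) [0..<a]"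
  by (simp add: mat_vec_def mkm_def sum_list_map2_upt)

lemma mat_mult_mkm: "b > 0 \<Longrightarrow> mat_mult (mkm a b F) (mkm b c G) = mkm a c (\<lambda>i j. \<Sum>k<b. F i k * G k j)"
  by (simp add: mat_mult_def transpose_mkm) (simp add: mkm_def sum_list_map2_upt)

lemma vadd_map: "length B = a \<Longrightarrow> vadd (map g [0..<a]) B = map (\<lambda>i. g i + B!i) [0..<a]"
  by (intro nth_equalityI) (auto simp: vadd_def)

lemma vadd_zero: "vadd (map g [0..<a]) (replicate a 0) = map g [0..<a]"
  by (simp add: vadd_map)

lemma realize_cons: "realize ((W,B)#R) y = (if R = [] then vadd (mat_vec W y) B else realize R (map relu (vadd (mat_vec W y) B)))"
  by (cases R) auto

definition bd2 :: "mat \<Rightarrow> mat \<Rightarrow> mat" where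
  "bd2 X Y = map (\<lambda>r. r @ replicate (ncols Y) 0) X @ map (\<lambda>r. replicate (ncols X) 0 @ r) Y"

lemma blockdiag_Cons: "ncols (blockdiag Xs) = sum_list (map ncols Xs) \<Longrightarrow> blockdiag (X#Xs) = bd2 X (blockdiag Xs)"
  by (simp add: bd2_def)

lemma blockdiag_single: "blockdiag [X] = X" by simp

lemma bd2_mkm:
  assumes "a > 0" "c > 0"
  shows "bd2 (mkm a b F) (mkm c e G) = mkm (a+c) (b+e)
     (\<lambda>i j. if i < a then (if j < b then F i j else 0) else (if b \<le> j then G (i-a) (j-b) else 0))"
  apply (rule mkm_eqI)
  using assms by (auto simp: bd2_def nth_append)

lemma blockdiag_rep:
  assumes "a > 0" "b > 0"
  shows "blockdiag (replicate (Suc n) (mkm a b F)) = mkm (Suc n * a) (Suc n * b)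
     (\<lambda>i j. if i div a = j div b then F (i mod a) (j mod b) else 0)"
proof (induct n)
  case 0
  show ?case using assms by (auto intro!: mkm_cong)
next
  case (Suc n)
  have "blockdiag (replicate (Suc (Suc n)) (mkm a b F)) = bd2 (mkm a b F) (blockdiag (replicate (Suc n) (mkm a b F)))"
  proof -
    have "ncols (blockdiag (replicate (Suc n) (mkm a b F))) = sum_list (map ncols (replicate (Suc n) (mkm a b F)))"
      unfolding Suc using assms by (simp add: sum_list_replicate)
    then show ?thesis by (metis blockdiag_Cons replicate_Suc)
  qed
  also have "\<dots> = mkm (Suc (Suc n) * a) (Suc (Suc n) * b)
     (\<lambda>i j. if i div a = j div b then F (i mod a) (j mod b) else 0)"
    unfolding Suc using assms
    apply (subst bd2_mkm)
      apply simp_all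
    apply (rule mkm_cong)
    apply (auto simp: div_if mod_if)
    done
  finally show ?case .
qed

lemma nth_concat_uniform:
  assumes "\<And>i. i < n \<Longrightarrow> length (g i) = c"
  shows "length (concat (map g [0..<n])) = n * c \<and>
    (\<forall>r < n * c. concat (map g [0..<n]) ! r = g (r div c) ! (r mod c))"
  using assms
proof (induct n)
  case 0
  then show ?case by simp
next
  case (Suc n)
  have IH: "length (concat (map g [0..<n])) = n * c"
      "\<And>r. r < n * c \<Longrightarrow> concat (map g [0..<n]) ! r = g (r div c) ! (r mod c)"
    using Suc by auto
  have lc: "length (g n) = c" using Suc by auto
  show ?case
  proof (intro conjI allI impI)
    show "length (concat (map g [0..<Suc n])) = Suc n * c" using IH lc by simp
    fix r assume r: "r < Suc n * c"
    show "concat (map g [0..<Suc n]) ! r = g (r div c) ! (r mod c)"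
    proof (cases "r < n * c")
      case True
      then show ?thesis using IH by (simp add: nth_append)
    next
      case False
      then have "r div c = n" using r
        by (metis add.commute div_nat_eqI mult.commute mult_Suc_right not_less)
      moreover have "r - n * c = r mod c" using False r
        by (metis calculation minus_mult_div_eq_mod mult.commute)
      ultimately show ?thesis using False IH by (simp add: nth_append)
    qed
  qed
qed

lemma affine_comp:
  assumes "b > 0" "length B = a" "length C = b" "length h = c"
  shows "vadd (mat_vec (mat_mult (mkm a b F) (mkm b c G)) h) (vadd (mat_vec (mkm a b F) C) B)
       = vadd (mat_vec (mkm a b F) (vadd (mat_vec (mkm b c G) h) C)) B"
proof -
  have e: "(\<Sum>j<c. (\<Sum>k<b. F i k * G k j) * h ! j) + ((\<Sum>k<b. F i k * C ! k) + B ! i)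
      = (\<Sum>k<b. F i k * ((\<Sum>j<c. G k j * h ! j) + C ! k)) + B ! i" for i
    by (simp add: sum_distrib_left sum_distrib_right distrib_left sum.distrib mult.assoc sum.swap[of _ "{..<c}"])
  show ?thesis using assms
    by (simp add: mat_mult_mkm mat_vec_mkm vadd_map e)
qed

lemma realize_comp2:
  assumes "b > 0" "length B = a" "length C = b"
    "length (vadd (mat_vec U x) A) = c"
  shows "realize (ncomp ((mkm a b F, B) # R) [(U,A),(mkm b c G, C)]) x
       = realize ((mkm a b F, B) # R) (realize [(U,A),(mkm b c G, C)] x)"
proof -
  let ?h = "map relu (vadd (mat_vec U x) A)"
  have n: "ncomp ((mkm a b F, B) # R) [(U,A),(mkm b c G, C)] =
     (U,A) # (mat_mult (mkm a b F) (mkm b c G), vadd (mat_vec (mkm a b F) C) B) # R"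
    by (simp add: ncomp_def)
  show ?thesis
    unfolding n using assms
    by (simp add: realize_cons[of U] realize_cons[of "mat_mult _ _"] realize_cons[of "mkm a b F"] affine_comp)
qed

definition Af :: "nat \<Rightarrow> nat \<Rightarrow> real" where
  "Af i j = (if i = 0 then (if j = 0 then 1 else if j = 1 then -1 else 0)
             else if j = (i+1) div 2 then (if odd i then 1 else -1) else 0)"

definition Sf :: "nat \<Rightarrow> nat \<Rightarrow> real" where
  "Sf i j = (if i = 0 then (if j = 0 \<or> j = 1 then 1 else if j = 2 then -1 else 0)
             else if j = 2*i+1 then 1 else if j = 2*i+2 then -1 else 0)"

lemma phi2_mkm: "phi2 = [(mkm 3 2 Af, replicate 3 0), (mkm 1 3 Sf, replicate 1 0)]"
  by (simp add: phi2_def mkm_def upt_rec Af_def Sf_def numeral_3_eq_3)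

lemma id1_mkm: "id1 = [(mkm 2 1 (\<lambda>i j. if i = 0 then 1 else -1), replicate 2 0),
                      (mkm 1 2 (\<lambda>i j. if j = 0 then 1 else -1), replicate 1 0)]"
  by (simp add: id1_def mkm_def upt_rec numeral_2_eq_2)

lemma concat_rep0: "concat (replicate n (replicate c (0::real))) = replicate (n*c) 0"
  by (induct n) (auto simp: replicate_add)

lemma idnet_mkm: "idnet (Suc p) =
  [(mkm (Suc p * 2) (Suc p * 1) (\<lambda>i j. if i div 2 = j div 1 then (if i mod 2 = 0 then 1 else -1) else 0), replicate (Suc p * 2) 0),
   (mkm (Suc p * 1) (Suc p * 2) (\<lambda>i j. if i div 1 = j div 2 then (if j mod 2 = 0 then 1 else -1) else 0), replicate (Suc p * 1) 0)]"
  (is "_ = ?rhs")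
proof -
  have "idnet (Suc p) = map (\<lambda>k. (blockdiag (replicate (Suc p) (fst (id1!k))), concat (replicate (Suc p) (snd (id1!k))))) [0..<2]"
    unfolding idnet_def par_def by (simp add: id1_def upt_rec del: replicate_Suc)
  also have "\<dots> = [(blockdiag (replicate (Suc p) (mkm 2 1 (\<lambda>i j. if i = 0 then 1 else -1))), concat (replicate (Suc p) (replicate 2 0))),
     (blockdiag (replicate (Suc p) (mkm 1 2 (\<lambda>i j. if j = 0 then 1 else -1))), concat (replicate (Suc p) (replicate 1 0)))]"
    unfolding id1_mkm by (simp add: upt_rec del: replicate_Suc)
  also have "\<dots> = ?rhs"
    apply (simp only: blockdiag_rep concat_rep0 zero_less_numeral zero_less_one)
    done
  finally show ?thesis .
qed

lemma Af_blk: "(if i < 3 then if j < 2 then Af i j else 0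
             else if 2 \<le> j
                  then if (i - 3) div 2 = (j - 2) div 1
                       then if (i - 3) mod 2 = 0 then 1 else - 1 else 0
                  else 0) = Af i j"
proof (cases "i < 3")
  case True
  then have "i = 0 \<or> i = 1 \<or> i = 2" by auto
  then show ?thesis unfolding Af_def by (elim disjE) (simp_all add: not_less)
next
  case False
  then obtain t where t: "i = t + 3" by (metis add.commute less_iff_Suc_add not_less numeral_3_eq_3 le_iff_add)
  have e1: "(i+1) div 2 = t div 2 + 2" using t by simp
  have e2: "odd i \<longleftrightarrow> (i - 3) mod 2 = 0" using t by presburger
  have e3: "i - 3 = t" using t by simp
  show ?thesis
  proof (cases "j < 2")
    case True
    then show ?thesis using False unfolding Af_def e1 by auto
  next
    case False2: False
    then obtain s where s: "j = s + 2" by (metis add.commute le_iff_add not_less)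
    show ?thesis using False False2 unfolding Af_def e1 e2 e3 s by auto
  qed
qed



lemma Sf_blk: "(if i = 0 then if j < 3 then Sf i j else 0
             else if 3 \<le> j
                  then if (i - 1) div 1 = (j - 3) div 2
                       then if (j - 3) mod 2 = 0 then 1 else - 1 else 0
                  else 0) = Sf i j"
proof (cases "i = 0")
  case True
  then show ?thesis unfolding Sf_def by auto
next
  case False
  show ?thesis
  proof (cases "j < 3")
    case True
    then show ?thesis using False unfolding Sf_def by auto
  next
    case False2: False
    then obtain s where s: "j = s + 3" by (metis add.commute le_iff_add not_less)
    have "s div 2 = i - 1 \<and> even s \<longleftrightarrow> s + 3 = 2 * i + 1" using False by presburger
    moreover have "s div 2 = i - 1 \<and> odd s \<longleftrightarrow> s + 3 = 2 * i + 2" using False by presburger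
    ultimately show ?thesis using False False2 unfolding Sf_def s by auto
  qed
qed



lemma blockdiag_two: "blockdiag [X, Y] = bd2 X Y"
  by (simp add: bd2_def)

lemma par_mkm: "par [phi2, idnet (Suc p)] =
   [(mkm (2*p+5) (p+3) Af, replicate (2*p+5) 0), (mkm (p+2) (2*p+5) Sf, replicate (p+2) 0)]"
proof -
  have "par [phi2, idnet (Suc p)] = [(blockdiag [fst (phi2!0), fst (idnet (Suc p) ! 0)], concat [snd (phi2!0), snd (idnet (Suc p) ! 0)]),
      (blockdiag [fst (phi2!1), fst (idnet (Suc p) ! 1)], concat [snd (phi2!1), snd (idnet (Suc p) ! 1)])]"
    unfolding par_def by (simp add: phi2_def upt_rec del: blockdiag.simps)
  also have "\<dots> = [(bd2 (mkm 3 2 Af) (mkm (Suc p * 2) (Suc p * 1) (\<lambda>i j. if i div 2 = j div 1 then (if i mod 2 = 0 then 1 else -1) else 0)),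
        replicate 3 0 @ replicate (Suc p * 2) 0),
      (bd2 (mkm 1 3 Sf) (mkm (Suc p * 1) (Suc p * 2) (\<lambda>i j. if i div 1 = j div 2 then (if j mod 2 = 0 then 1 else -1) else 0)),
        replicate 1 0 @ replicate (Suc p * 1) 0)]"
    unfolding blockdiag_two by (simp only: phi2_mkm idnet_mkm nth_Cons_0 nth_Cons_Suc One_nat_def fst_conv snd_conv concat.simps append_Nil2)
  also have "\<dots> = [(mkm (2*p+5) (p+3) Af, replicate (2*p+5) 0), (mkm (p+2) (2*p+5) Sf, replicate (p+2) 0)]"
    apply (simp only: bd2_mkm zero_less_numeral zero_less_one mult_pos_pos zero_less_Suc replicate_add[symmetric])
    apply (intro arg_cong2[where f=Cons] refl arg_cong2[where f=Pair])
       apply simp_all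
     apply (rule mkm_cong2)
       apply simp
      apply simp
     apply (rule Af_blk)
     apply (rule mkm_cong2)
       apply simp
      apply simp
    apply (rule Sf_blk)
    done
  finally show ?thesis .
qed

lemma Af_sum:
  assumes "2 \<le> n" "i < 2*n - 1"
  shows "(\<Sum>k<n. Af i k * g k) = (if i = 0 then g 0 - g 1 else if odd i then g ((i+1) div 2) else - g ((i+1) div 2))"
proof (cases "i = 0")
  case True
  have "(\<Sum>k<n. Af i k * g k) = (\<Sum>k<n. (if k = 0 then g 0 else 0) + (if k = 1 then - g 1 else 0))"
    using True by (intro sum.cong) (auto simp: Af_def)
  also have "\<dots> = g 0 - g 1" using assms by (simp add: sum.distrib)
  finally show ?thesis using True by simp
next
  case False
  have lt: "(i+1) div 2 < n" using assms by linarith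
  have "(\<Sum>k<n. Af i k * g k) = (\<Sum>k<n. (if k = (i+1) div 2 then (if odd i then g k else - g k) else 0))"
    using False by (intro sum.cong) (auto simp: Af_def)
  also have "\<dots> = (if odd i then g ((i+1) div 2) else - g ((i+1) div 2))" using lt by (simp add: sum.delta)
  finally show ?thesis using False by simp
qed

lemma Sf_sum:
  assumes "i < n"
  shows "(\<Sum>j<2*n+1. Sf i j * g j) = (if i = 0 then g 0 + g 1 - g 2 else g (2*i+1) - g (2*i+2))"
proof (cases "i = 0")
  case True
  have "(\<Sum>j<2*n+1. Sf i j * g j) = (\<Sum>j<2*n+1. (if j = 0 then g 0 else 0) + (if j = 1 then g 1 else 0) + (if j = 2 then - g 2 else 0))"
    using True by (intro sum.cong) (auto simp: Sf_def)
  also have "\<dots> = g 0 + g 1 - g 2" using assms by (simp add: sum.distrib)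
  finally show ?thesis using True by simp
next
  case False
  have "(\<Sum>j<2*n+1. Sf i j * g j) = (\<Sum>j<2*n+1. (if j = 2*i+1 then g (2*i+1) else 0) + (if j = 2*i+2 then - g (2*i+2) else 0))"
    using False by (intro sum.cong) (auto simp: Sf_def)
  also have "\<dots> = g (2*i+1) - g (2*i+2)" using assms by (simp add: sum.distrib)
  finally show ?thesis using False by simp
qed

lemma relu_pm: "relu a + relu (- a) = \<bar>a\<bar>" "relu a - relu (- a) = a"
  by (auto simp: relu_def)

lemma realize_par:
  assumes "length x = p + 3"
  shows "realize (par [phi2, idnet (Suc p)]) x = map (\<lambda>i. if i = 0 then max (x!0) (x!1) else x!(i+1)) [0..<p+2]"
proof -
  define h where "h = map relu (vadd (mat_vec (mkm (2*p+5) (p+3) Af) x) (replicate (2*p+5) 0))"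
  have h: "h = map (\<lambda>j. relu (\<Sum>k<p+3. Af j k * x!k)) [0..<2*p+5]"
    unfolding h_def using assms by (simp add: mat_vec_mkm vadd_map)
  have hj: "j < 2*p+5 \<Longrightarrow> h!j = relu (if j = 0 then x!0 - x!1 else if odd j then x!((j+1) div 2) else - x!((j+1) div 2))" for j
    unfolding h by (simp add: Af_sum[where n="p+3"])
  have "realize (par [phi2, idnet (Suc p)]) x = vadd (mat_vec (mkm (p+2) (2*p+5) Sf) h) (replicate (p+2) 0)"
    unfolding par_mkm h_def by simp
  also have "\<dots> = map (\<lambda>i. \<Sum>j<2*(p+2)+1. Sf i j * h!j) [0..<p+2]"
  proof -
    have lh: "length h = 2*(p+2)+1" unfolding h by simp
    have e: "2*p+5 = 2*(p+2)+1" by simp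
    show ?thesis unfolding e by (simp only: mat_vec_mkm[OF lh] vadd_zero)
  qed
  also have "\<dots> = map (\<lambda>i. if i = 0 then max (x!0) (x!1) else x!(i+1)) [0..<p+2]"
  proof (intro map_cong refl)
    fix i assume "i \<in> set [0..<p+2]"
    then have i: "i < p + 2" by auto
    show "(\<Sum>j<2*(p+2)+1. Sf i j * h!j) = (if i = 0 then max (x!0) (x!1) else x!(i+1))"
    proof (cases "i = 0")
      case True
      show ?thesis apply (subst Sf_sum[OF i]) using True by (simp add: hj relu_def)
    next
      case False
      have a: "(2*i+1+1) div 2 = i+1" "(2*i+2+1) div 2 = i+1" by simp_all
      have "h!(2*i+1) = relu (x!(i+1))" "h!(2*i+2) = relu (- x!(i+1))"
        using i False by (simp_all add: hj a)
      then show ?thesis apply (subst Sf_sum[OF i]) using i False by (simp add: relu_pm)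
    qed
  qed
  finally show ?thesis .
qed

lemma Max_mono_ex:
  assumes "finite A" "A \<noteq> {}" "finite B" "B \<noteq> {}" "\<And>a. a \<in> A \<Longrightarrow> \<exists>b\<in>B. a \<le> b"
  shows "Max A \<le> (Max B :: real)"
proof -
  have "\<forall>a\<in>A. a \<le> Max B" using assms(3,5) by (meson Max_ge order_trans)
  then show ?thesis using assms(1,2) by simp
qed

lemma Max_par:
  fixes x :: "real list"
  assumes "length x = p + 3"
  shows "Max (set (map (\<lambda>i. if i = 0 then max (x!0) (x!1) else x!(i+1)) [0..<p+2])) = Max (set x)"
    (is "Max (set ?y) = _")
proof (rule antisym)
  have x0: "x!0 \<in> set x" "x!1 \<in> set x" using assms by auto
  show "Max (set ?y) \<le> Max (set x)"
  proof (rule Max_mono_ex)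
    fix a assume "a \<in> set ?y"
    then obtain i where i0: "i \<in> {0..<p+2}" and ia: "a = (if i = 0 then max (x!0) (x!1) else x!(i+1))"
      unfolding set_map set_upt image_iff by blast
    have i: "i < p+2" "a = (if i = 0 then max (x!0) (x!1) else x!(i+1))" using i0 ia by auto
    show "\<exists>b\<in>set x. a \<le> b"
    proof (cases "i = 0")
      case True
      then show ?thesis using i x0 by (cases "x!0 \<le> x!1") (auto simp: max_def)
    next
      case False
      then show ?thesis using i assms by (intro bexI[of _ "x!(i+1)"]) auto
    qed
  qed (use assms in auto)
  show "Max (set x) \<le> Max (set ?y)"
  proof (rule Max_mono_ex)
    fix a assume "a \<in> set x"
    then obtain i where i: "i < p+3" "a = x!i" using assms by (auto simp: in_set_conv_nth)
    have y0: "max (x!0) (x!1) \<in> set ?y" by (force simp del: upt_Suc)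
    show "\<exists>b\<in>set ?y. a \<le> b"
    proof (cases "i \<le> 1")
      case True
      then have "i = 0 \<or> i = 1" by auto
      then show ?thesis using i y0 by (intro bexI[of _ "max (x!0) (x!1)"]) auto
    next
      case False
      then have "x!i \<in> set ?y" using i
        by (auto simp del: upt_Suc intro!: image_eqI[of _ _ "i-1"])
      then show ?thesis using i by auto
    qed
  qed (use assms in auto)
qed

lemma Af_abs: "\<bar>Af i j\<bar> \<le> 1" by (simp add: Af_def)
lemma Sf_abs: "\<bar>Sf i j\<bar> \<le> 1" by (simp add: Sf_def)

lemma Sf_nz: "Sf l j \<noteq> 0 \<Longrightarrow> l = (if j \<le> 2 then 0 else (j - 1) div 2)"
  unfolding Sf_def by (auto split: if_splits)

lemma sparse_bound:
  fixes F G :: "nat \<Rightarrow> real"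
  assumes "\<And>l. l < b \<Longrightarrow> \<bar>F l\<bar> \<le> 1" "\<And>l. l < b \<Longrightarrow> \<bar>G l\<bar> \<le> c" "0 \<le> c"
    "\<And>l1 l2. l1 < b \<Longrightarrow> l2 < b \<Longrightarrow> G l1 \<noteq> 0 \<Longrightarrow> G l2 \<noteq> 0 \<Longrightarrow> l1 = l2"
  shows "\<bar>\<Sum>l<b. F l * G l\<bar> \<le> c"
proof (cases "\<exists>l0<b. G l0 \<noteq> 0")
  case True
  then obtain l0 where l0: "l0 < b" "G l0 \<noteq> 0" by auto
  have "(\<Sum>l<b. F l * G l) = (\<Sum>l<b. if l = l0 then F l0 * G l0 else 0)"
    using assms(4)[OF l0(1) _ l0(2)] by (intro sum.cong) auto
  also have "\<dots> = F l0 * G l0" using l0 by (simp add: sum.delta)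
  finally have "\<bar>\<Sum>l<b. F l * G l\<bar> = \<bar>F l0\<bar> * \<bar>G l0\<bar>" by (simp add: abs_mult)
  also have "\<dots> \<le> 1 * c" using assms(1,2)[OF l0(1)] by (intro mult_mono) auto
  finally show ?thesis by simp
next
  case False
  then have "(\<Sum>l<b. F l * G l) = 0" by (intro sum.neutral) auto
  then show ?thesis using assms by simp
qed

lemma set_concat_mkm: "e \<in> set (concat (mkm a b F)) \<Longrightarrow> \<exists>i<a. \<exists>j<b. e = F i j"
  unfolding mkm_def by auto blast

lemma realize_phi2: "length x = 2 \<Longrightarrow> realize phi2 x = [Max (set x)]"
proof -
  assume "length x = 2"
  then obtain a b where x: "x = [a, b]"
    by (cases x; cases "tl x") auto
  show ?thesis unfolding x
    by (simp add: phi2_def mat_vec_def vadd_def relu_def max_def)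
qed

lemma upt_shift_map: "map (\<lambda>j. 2*(Suc p+2-j)-1) [1..<Suc p+2] = (2*(p+2)-1) # map (\<lambda>j. 2*(p+2-j)-1) [1..<p+2]"
proof -
  have "[1..<Suc p+2] = 1 # map Suc [1..<p+2]"
    by (simp add: map_Suc_upt upt_conv_Cons del: upt_Suc)
  then show ?thesis by (simp del: upt_Suc)
qed

lemma mat_vec_zero: "mat_vec (mkm a b F) (replicate b 0) = replicate a 0"
proof -
  have "(\<Sum>k<b. F i k * replicate b 0 ! k) = 0" for i by (intro sum.neutral) auto
  then show ?thesis by (simp add: mat_vec_mkm map_replicate_const)
qed

lemma vadd_zero2: "vadd (replicate a 0) (replicate a 0) = replicate a (0::real)"
  by (intro nth_equalityI) (auto simp: vadd_def)

lemma phi_inv: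
  fixes phi :: "nat \<Rightarrow> net"
  assumes step: "\<forall>k\<ge>2. phi (Suc k) = ncomp (phi k) (par [phi 2, idnet (k-1)])" and p2: "phi 2 = phi2"
  shows "\<exists>R. phi (p+2) = (mkm (2*(p+2)-1) (p+2) Af, replicate (2*(p+2)-1) 0) # R
     \<and> map (\<lambda>(W,B). length B) R = map (\<lambda>j. 2*(p+2-j)-1) [1..<p+2]
     \<and> (\<forall>e\<in>set (vectorize R). \<bar>e\<bar> \<le> 1)
     \<and> (\<forall>x. length x = p+2 \<longrightarrow> realize (phi (p+2)) x = [Max (set x)])"
proof (induct p)
  case 0
  let ?R = "[(mkm 1 3 Sf, replicate 1 (0::real))]"
  have "phi (0+2) = (mkm (2*(0+2)-1) (0+2) Af, replicate (2*(0+2)-1) 0) # ?R"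
    by (simp only: add_0 p2 phi2_mkm) simp
  moreover have "map (\<lambda>(W,B). length B) ?R = map (\<lambda>j. 2*(0+2-j)-1) [1..<0+2]" by simp
  moreover have "\<forall>e\<in>set (vectorize ?R). \<bar>e\<bar> \<le> 1"
    by (auto simp: vectorize_def mkm_def Sf_abs)
  moreover have "\<forall>x. length x = 0+2 \<longrightarrow> realize (phi (0+2)) x = [Max (set x)]"
    unfolding add_0 p2 using realize_phi2 by blast
  ultimately show ?case by blast
next
  case (Suc p)
  then obtain R where R: "phi (p+2) = (mkm (2*(p+2)-1) (p+2) Af, replicate (2*(p+2)-1) 0) # R"
     "map (\<lambda>(W,B). length B) R = map (\<lambda>j. 2*(p+2-j)-1) [1..<p+2]"
     "\<forall>e\<in>set (vectorize R). \<bar>e\<bar> \<le> 1"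
     "\<forall>x. length x = p+2 \<longrightarrow> realize (phi (p+2)) x = [Max (set x)]" by blast
  have ph: "phi (Suc p + 2) = ncomp (phi (p+2)) (par [phi2, idnet (Suc p)])"
  proof -
    have "phi (Suc (p+2)) = ncomp (phi (p+2)) (par [phi 2, idnet (p+2-1)])" using step[rule_format, of "p+2"] by simp
    then show ?thesis using p2 by simp
  qed
  define M where "M = mat_mult (mkm (2*(p+2)-1) (p+2) Af) (mkm (p+2) (2*p+5) Sf)"
  define bb where "bb = vadd (mat_vec (mkm (2*(p+2)-1) (p+2) Af) (replicate (p+2) 0)) (replicate (2*(p+2)-1) (0::real))"
  have nc: "phi (Suc p + 2) = (mkm (2*p+5) (p+3) Af, replicate (2*p+5) 0) # (M, bb) # R"
    unfolding ph R(1) par_mkm by (simp add: ncomp_def M_def bb_def)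
  have M: "M = mkm (2*(p+2)-1) (2*p+5) (\<lambda>i j. \<Sum>l<p+2. Af i l * Sf l j)"
    unfolding M_def by (simp add: mat_mult_mkm)
  have bb: "bb = replicate (2*(p+2)-1) 0"
    unfolding bb_def by (simp only: mat_vec_zero vadd_zero2)
  have "phi (Suc p+2) = (mkm (2*(Suc p+2)-1) (Suc p+2) Af, replicate (2*(Suc p+2)-1) 0) # ((M, bb) # R)"
  proof -
    have "2*(Suc p+2)-1 = 2*p+5" "Suc p+2 = p+3" by simp_all
    then show ?thesis unfolding nc by (simp only:)
  qed
  moreover have "map (\<lambda>(W,B). length B) ((M, bb) # R) = map (\<lambda>j. 2*(Suc p+2-j)-1) [1..<Suc p+2]"
    unfolding upt_shift_map using R(2) by (simp add: bb del: upt_Suc)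
  moreover have "\<forall>e\<in>set (vectorize ((M, bb) # R)). \<bar>e\<bar> \<le> 1"
  proof -
    have "\<bar>e\<bar> \<le> 1" if e_in: "e \<in> set (concat M)" for e
    proof -
      obtain i j where "e = (\<Sum>l<p+2. Af i l * Sf l j)" using set_concat_mkm[OF e_in[unfolded M]] by blast
      moreover have "\<bar>\<Sum>l<p+2. Af i l * Sf l j\<bar> \<le> 1"
        by (rule sparse_bound) (auto simp: Af_abs Sf_abs dest!: Sf_nz)
      ultimately show ?thesis by simp
    qed
    moreover have "vectorize ((M, bb) # R) = concat M @ bb @ vectorize R" by (simp add: vectorize_def)
    ultimately show ?thesis using R(3) by (auto simp: bb)
  qed
  moreover have "\<forall>x. length x = Suc p+2 \<longrightarrow> realize (phi (Suc p+2)) x = [Max (set x)]"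
  proof (intro allI impI)
    fix x :: vec assume lx: "length x = Suc p + 2"
    then have lx': "length x = p + 3" by simp
    have "realize (phi (Suc p+2)) x = realize (phi (p+2)) (realize (par [phi2, idnet (Suc p)]) x)"
      unfolding ph R(1) par_mkm
      by (rule realize_comp2) (simp_all add: vadd_def mat_vec_def)
    also have "\<dots> = [Max (set x)]"
    proof -
      have "length (map (\<lambda>i. if i = 0 then max (x!0) (x!1) else x!(i+1)) [0..<p+2]) = p+2" by simp
      then show ?thesis unfolding realize_par[OF lx'] using R(4) Max_par[OF lx'] by presburger
    qed
    finally show "realize (phi (Suc p+2)) x = [Max (set x)]" .
  qed
  ultimately show ?case by blast
qed



definition W1e :: "nat \<Rightarrow> nat \<Rightarrow> real" where
  "W1e i j = (if j = i div 2 then (if even i then 1 else -1) else 0)"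

lemma W1_mkm: "W1 d = mkm (2*d) d W1e"
proof -
  let ?g = "\<lambda>i. [unitv d i, map uminus (unitv d i)]"
  have u: "length (concat (map ?g [0..<d])) = d * 2 \<and>
    (\<forall>r < d * 2. concat (map ?g [0..<d]) ! r = ?g (r div 2) ! (r mod 2))"
    by (rule nth_concat_uniform) simp
  show ?thesis unfolding W1_def
  proof (rule mkm_eqI)
    show "length (concat (map ?g [0..<d])) = 2*d" using u by simp
    fix i assume i: "i < 2*d"
    have e: "concat (map ?g [0..<d]) ! i = ?g (i div 2) ! (i mod 2)" using u i by simp
    show "length (concat (map ?g [0..<d]) ! i) = d" unfolding e
      by (cases "i mod 2 = 0") (auto simp: unitv_def)
    fix j assume j: "j < d"
    show "concat (map ?g [0..<d]) ! i ! j = W1e i j" unfolding e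
      using j by (cases "i mod 2 = 0") (auto simp: unitv_def W1e_def)
  qed
qed

lemma Bz_nth: "length (Bz d z) = 2*d \<and> (\<forall>t<2*d. Bz d z ! t = (if even t then -(z!(t div 2)) else z!(t div 2)))"
proof -
  let ?g = "\<lambda>i. [-(z!i), z!i]"
  have u: "length (concat (map ?g [0..<d])) = d * 2 \<and>
    (\<forall>r < d * 2. concat (map ?g [0..<d]) ! r = ?g (r div 2) ! (r mod 2))"
    by (rule nth_concat_uniform) simp
  show ?thesis unfolding Bz_def using u
    by (auto simp: mult.commute) (metis even_iff_mod_2_eq_zero mod2_eq_if nth_Cons_0 nth_Cons_Suc One_nat_def)
qed

lemma concat_rep_mkm:
  assumes "a > 0"
  shows "concat (replicate n (mkm a b F)) = mkm (n*a) b (\<lambda>i j. F (i mod a) j)"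
proof -
  have r: "replicate n (mkm a b F) = map (\<lambda>_. mkm a b F) [0..<n]" by (simp add: map_replicate_const)
  have u: "length (concat (map (\<lambda>_. mkm a b F) [0..<n])) = n * a \<and>
    (\<forall>r < n * a. concat (map (\<lambda>_. mkm a b F) [0..<n]) ! r = mkm a b F ! (r mod a))"
    by (rule nth_concat_uniform) simp
  show ?thesis unfolding r
    by (rule mkm_eqI) (use u assms in auto)
qed

lemma W2_mkm: "W2 d L = mkm 1 (2*d) (\<lambda>_ _. -L)"
  by (simp add: W2_def mkm_def map_replicate_const)

lemma block_sum:
  fixes g :: "nat \<Rightarrow> real"
  assumes "i < n" "c > 0"
  shows "(\<Sum>r<n*c. (if i = r div c then a else 0) * g r) = a * (\<Sum>t<c. g (i*c+t))"
proof -
  have "(\<Sum>r<n*c. (if i = r div c then a else 0) * g r)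
      = (\<Sum>q<n. \<Sum>r\<in>{q*c..<q*c+c}. (if i = r div c then a else 0) * g r)"
    by (rule sum.nat_group[symmetric])
  also have "\<dots> = (\<Sum>q<n. if q = i then a * (\<Sum>r\<in>{q*c..<q*c+c}. g r) else 0)"
  proof (rule sum.cong[OF refl])
    fix q assume "q \<in> {..<n}"
    have "r \<in> {q*c..<q*c+c} \<Longrightarrow> r div c = q" for r
      using assms(2) by (auto intro: div_nat_eqI simp: mult.commute)
    then show "(\<Sum>r\<in>{q*c..<q*c+c}. (if i = r div c then a else 0) * g r) = (if q = i then a * (\<Sum>r\<in>{q*c..<q*c+c}. g r) else 0)"
      by (auto simp: sum_distrib_left intro!: sum.neutral)
  qed
  also have "\<dots> = a * (\<Sum>r\<in>{i*c..<i*c+c}. g r)" using assms by (simp add: sum.delta')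
  also have "(\<Sum>r\<in>{i*c..<i*c+c}. g r) = (\<Sum>t<c. g (i*c+t))"
    using sum.shift_bounds_nat_ivl[of g 0 "i*c" c] by (simp add: atLeast0LessThan add.commute)
  finally show ?thesis .
qed

lemma pair_sum:
  fixes g :: "nat \<Rightarrow> real"
  shows "(\<Sum>t<2*d. g t) = (\<Sum>q<d. g (2*q) + g (2*q+1))"
proof -
  have "(\<Sum>t<2*d. g t) = (\<Sum>q<d. \<Sum>t\<in>{q*2..<q*2+2}. g t)"
    using sum.nat_group[of g 2 d] by (simp add: mult.commute)
  also have "\<dots> = (\<Sum>q<d. g (2*q) + g (2*q+1))"
  proof (rule sum.cong[OF refl])
    fix q :: nat
    have "{q*2..<q*2+2} = {2*q, 2*q+1}" by auto
    then show "(\<Sum>t\<in>{q*2..<q*2+2}. g t) = g (2*q) + g (2*q+1)" by simp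
  qed
  finally show ?thesis .
qed

lemma W1e_sum:
  assumes "t < 2*d"
  shows "(\<Sum>j<d. W1e t j * g j) = (if even t then g (t div 2) else - g (t div 2))"
proof -
  have "(\<Sum>j<d. W1e t j * g j) = (\<Sum>j<d. if j = t div 2 then (if even t then g (t div 2) else - g (t div 2)) else 0)"
    by (intro sum.cong) (auto simp: W1e_def)
  also have "\<dots> = (if even t then g (t div 2) else - g (t div 2))"
  proof -
    have "t div 2 < d" using assms by linarith
    then show ?thesis by (simp add: sum.delta)
  qed
  finally show ?thesis .
qed



theorem proposition3p5:
  fixes phi :: "nat \<Rightarrow> net" and d :: nat and L :: real and D :: "vec set"
    and f :: "vec \<Rightarrow> real" and M :: "vec set" and m :: "nat \<Rightarrow> vec"
  assumes phi_net: "\<forall>k\<ge>2. valid_net (phi k)"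
    and phi_in: "\<forall>k\<ge>2. net_in (phi k) = net_out (par [phi 2, idnet (k-1)])"
    and phi_step: "\<forall>k\<ge>2. phi (Suc k) = ncomp (phi k) (par [phi 2, idnet (k-1)])"
    and phi_2: "phi 2 = phi2"
    and d_pos: "d \<ge> 1"
    and D_dim: "\<forall>x\<in>D. length x = d"
    and lip: "\<forall>x\<in>D. \<forall>y\<in>D. \<bar>f x - f y\<bar> \<le> L * dist1 d x y"
    and M_sub: "M \<subseteq> D" and M_fin: "finite M" and M_card: "card M \<ge> 2"
    and m_bij: "bij_betw m {1..card M} M"
  defines "\<Phi> \<equiv> ncomp (phi (card M))
       [(concat (replicate (card M) (W1 d)), concat (map (\<lambda>j. Bz d (m j)) [1..<card M + 1])),
        (blockdiag (replicate (card M) (W2 d L)), map (\<lambda>j. f (m j)) [1..<card M + 1])]"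
  shows "net_dims \<Phi> = [d, 2*d*card M] @ map (\<lambda>j. 2*(card M - j) - 1) [0..<card M] \<and>
         maxnorm (vectorize \<Phi>) \<le> Max {1, L, Max (maxnorm ` M), 2 * Max ((\<lambda>z. \<bar>f z\<bar>) ` M)} \<and>
         (SUP x\<in>D. ereal \<bar>f x - hd (realize \<Phi> x)\<bar>)
           \<le> ereal (2*L) * (SUP x\<in>D. INF y\<in>M. ereal (dist1 d x y))"
proof -
  define n where "n = card M"
  have n2: "n \<ge> 2" using M_card n_def by simp
  obtain p where np: "n = p + 2" using n2 by (metis add.commute le_iff_add)
  have mimg: "m ` {1..n} = M" using m_bij n_def by (simp add: bij_betw_def)
  have mM: "j \<in> {1..n} \<Longrightarrow> m j \<in> M" for j using mimg by blast
  have lenM: "z \<in> M \<Longrightarrow> length z = d" for z using M_sub D_dim by blast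
  have Mne: "M \<noteq> {}" using n2 n_def by auto
  have Lnn: "L \<ge> 0"
  proof -
    have "\<not> card M \<le> Suc 0" using M_card by simp
    then obtain z1 z2 where z: "z1 \<in> M" "z2 \<in> M" "z1 \<noteq> z2"
      using card_le_Suc0_iff_eq[OF M_fin] by blast
    have "\<exists>i<d. z1!i \<noteq> z2!i"
    proof (rule ccontr)
      assume "\<not> (\<exists>i<d. z1!i \<noteq> z2!i)"
      then have "z1 = z2" using lenM z by (intro nth_equalityI) auto
      then show False using z by simp
    qed
    then obtain i where i: "i < d" "z1!i \<noteq> z2!i" by blast
    have "0 < \<bar>z1!i - z2!i\<bar>" using i by simp
    also have "\<dots> \<le> dist1 d z1 z2" unfolding dist1_def
      by (rule member_le_sum[of i "{..<d}" "\<lambda>i. \<bar>z1!i - z2!i\<bar>"]) (use i in auto)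
    finally have dpos: "0 < dist1 d z1 z2" .
    have "0 \<le> L * dist1 d z1 z2" using lip z M_sub by (meson abs_ge_zero order_trans subsetD)
    then show ?thesis using dpos by (simp add: zero_le_mult_iff)
  qed
  obtain R where R: "phi n = (mkm (2*n-1) n Af, replicate (2*n-1) 0) # R"
     "map (\<lambda>(W,B). length B) R = map (\<lambda>j. 2*(n-j)-1) [1..<n]"
     "\<forall>e\<in>set (vectorize R). \<bar>e\<bar> \<le> 1"
     "\<And>x. length x = n \<Longrightarrow> realize (phi n) x = [Max (set x)]"
    using phi_inv[OF phi_step phi_2, of p] unfolding np by blast
  define U where "U = concat (replicate n (W1 d))"
  define A where "A = concat (map (\<lambda>j. Bz d (m j)) [1..<n + 1])"
  define V where "V = blockdiag (replicate n (W2 d L))"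
  define C where "C = map (\<lambda>j. f (m j)) [1..<n + 1]"
  define Vf where "Vf = (\<lambda>i j. if i = j div (2*d) then -L else (0::real))"
  have dpos: "2*d > 0" using d_pos by simp
  have U: "U = mkm (n*(2*d)) d (\<lambda>i j. W1e (i mod (2*d)) j)"
    unfolding U_def W1_mkm using concat_rep_mkm[OF dpos] by simp
  have Aeq: "A = concat (map (\<lambda>j. Bz d (m (Suc j))) [0..<n])"
    unfolding A_def by (simp add: map_Suc_upt[symmetric] o_def del: upt_Suc)
  have Au: "length A = n * (2*d) \<and> (\<forall>r < n * (2*d). A ! r = Bz d (m (Suc (r div (2*d)))) ! (r mod (2*d)))"
    unfolding Aeq by (rule nth_concat_uniform) (simp add: Bz_nth)
  have V: "V = mkm n (n*(2*d)) Vf"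
  proof -
    have "V = mkm (Suc (p+1) * 1) (Suc (p+1) * (2*d)) (\<lambda>i j. if i div 1 = j div (2*d) then (\<lambda>_ _. -L) (i mod 1) (j mod (2*d)) else 0)"
      unfolding V_def W2_mkm np using blockdiag_rep[of 1 "2*d" "p+1" "\<lambda>_ _. -L"] dpos by simp
    also have "\<dots> = mkm n (n*(2*d)) Vf" by (rule mkm_cong2) (auto simp: np Vf_def)
    finally show ?thesis .
  qed
  have lC: "length C = n" by (simp add: C_def)
  have Cn: "k < n \<Longrightarrow> C ! k = f (m (Suc k))" for k by (simp add: C_def del: upt_Suc)
  define Mm where "Mm = mat_mult (mkm (2*n-1) n Af) V"
  define bb where "bb = vadd (mat_vec (mkm (2*n-1) n Af) C) (replicate (2*n-1) 0)"
  have Phi: "\<Phi> = (U, A) # (Mm, bb) # R"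
    unfolding \<Phi>_def n_def[symmetric] U_def[symmetric] A_def[symmetric] V_def[symmetric] C_def[symmetric]
    by (simp add: ncomp_def R(1) Mm_def bb_def)
  have bb: "bb = map (\<lambda>i. \<Sum>k<n. Af i k * C!k) [0..<2*n-1]"
    unfolding bb_def using lC by (simp add: mat_vec_mkm vadd_zero)
  have Phi0: "\<Phi> = ncomp (phi n) [(U,A),(V,C)]"
    unfolding \<Phi>_def n_def[symmetric] U_def[symmetric] A_def[symmetric] V_def[symmetric] C_def[symmetric] ..
  have dims: "net_dims \<Phi> = [d, 2*d*card M] @ map (\<lambda>j. 2*(card M - j) - 1) [0..<card M]"
  proof -
    have lbb: "length bb = 2*n-1" by (simp add: bb)
    have np0: "n*(2*d) > 0" using n2 dpos by simp
    have "net_dims \<Phi> = d # n*(2*d) # (2*n-1) # map (\<lambda>(W,B). length B) R"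
      unfolding Phi net_dims_def using Au lbb np0 by (simp add: U)
    also have "\<dots> = [d, 2*d*n] @ map (\<lambda>j. 2*(n-j)-1) [0..<n]"
      using R(2) n2 by (simp add: upt_conv_Cons del: upt_Suc)
    finally show ?thesis unfolding n_def .
  qed
  have realx: "hd (realize \<Phi> x) = Max ((\<lambda>z. f z - L * dist1 d x z) ` M)" if xD: "x \<in> D" for x
  proof -
    have lx: "length x = d" using xD D_dim by blast
    define h where "h = map relu (vadd (mat_vec U x) A)"
    have h: "h = map (\<lambda>r. relu ((\<Sum>j<d. W1e (r mod (2*d)) j * x!j) + A!r)) [0..<n*(2*d)]"
      unfolding h_def U using lx Au by (simp add: mat_vec_mkm vadd_map)
    have lh: "length h = n*(2*d)" by (simp add: h)
    have hr: "h!r = relu (if even (r mod (2*d)) then x!((r mod (2*d)) div 2) - m (Suc (r div (2*d))) ! ((r mod (2*d)) div 2)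
                else m (Suc (r div (2*d))) ! ((r mod (2*d)) div 2) - x!((r mod (2*d)) div 2))"
      if r: "r < n*(2*d)" for r
    proof -
      have t: "r mod (2*d) < 2*d" using dpos by simp
      show ?thesis using r Au Bz_nth t by (simp add: h W1e_sum[OF t])
    qed
    have hq: "h!(i*(2*d) + 2*q) + h!(i*(2*d) + (2*q+1)) = \<bar>x!q - m (Suc i) ! q\<bar>"
      if i: "i < n" and q: "q < d" for i q
    proof -
      have t1: "2*q < 2*d" "2*q+1 < 2*d" using q by simp_all
      have dm: "(i*(2*d) + t) mod (2*d) = t \<and> (i*(2*d) + t) div (2*d) = i" if "t < 2*d" for t
        using that by (simp add: add.commute[of "i*(2*d)"])
      have m1: "(i*(2*d) + 2*q) mod (2*d) = 2*q" "(i*(2*d) + 2*q) div (2*d) = i"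
        using dm[OF t1(1)] by simp_all
      have m2: "(i*(2*d) + (2*q+1)) mod (2*d) = 2*q+1" "(i*(2*d) + (2*q+1)) div (2*d) = i"
        using dm[OF t1(2)] by simp_all
      have b1: "i*(2*d) + 2*q < n*(2*d)" "i*(2*d) + (2*q+1) < n*(2*d)"
      proof -
        have "(i+1)*(2*d) \<le> n*(2*d)" using i by (intro mult_right_mono) auto
        then show "i*(2*d) + 2*q < n*(2*d)" "i*(2*d) + (2*q+1) < n*(2*d)" using t1 by (simp_all add: algebra_simps)
      qed
      show ?thesis using hr[OF b1(1)] hr[OF b1(2)] unfolding m1 m2
        by (simp add: relu_def)
    qed
    have ysum: "(\<Sum>r<n*(2*d). Vf i r * h!r) = -L * dist1 d x (m (Suc i))" if i: "i < n" for i
    proof -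
      have "(\<Sum>r<n*(2*d). Vf i r * h!r) = (\<Sum>r<n*(2*d). (if i = r div (2*d) then -L else 0) * h!r)"
        by (simp add: Vf_def)
      also have "\<dots> = -L * (\<Sum>t<2*d. h!(i*(2*d)+t))" by (rule block_sum[OF i dpos])
      also have "(\<Sum>t<2*d. h!(i*(2*d)+t)) = (\<Sum>q<d. h!(i*(2*d)+2*q) + h!(i*(2*d)+(2*q+1)))"
        by (rule pair_sum)
      also have "\<dots> = dist1 d x (m (Suc i))" unfolding dist1_def
        by (rule sum.cong[OF refl], rule hq[OF i]) simp
      finally show ?thesis .
    qed
    define y where "y = map (\<lambda>i. f (m (Suc i)) - L * dist1 d x (m (Suc i))) [0..<n]"
    have y: "realize [(U,A),(V,C)] x = y"
    proof -
      have "realize [(U,A),(V,C)] x = vadd (mat_vec V h) C" by (simp add: h_def)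
      also have "\<dots> = map (\<lambda>i. (\<Sum>r<n*(2*d). Vf i r * h!r) + C!i) [0..<n]"
        unfolding V using lh lC by (simp add: mat_vec_mkm vadd_map)
      also have "\<dots> = y" unfolding y_def by (rule map_cong) (auto simp: ysum Cn)
      finally show ?thesis .
    qed
    have ly: "length y = n" by (simp add: y_def)
    have "realize \<Phi> x = realize (phi n) (realize [(U,A),(V,C)] x)"
      unfolding Phi0 R(1) V using n2 lC
      by (intro realize_comp2) (simp_all add: vadd_def mat_vec_def U Au)
    also have "\<dots> = [Max (set y)]" using y R(4)[OF ly] by simp
    finally have "hd (realize \<Phi> x) = Max (set y)" by simp
    moreover have "set y = (\<lambda>z. f z - L * dist1 d x z) ` M"
    proof -
      have "set y = (\<lambda>i. f (m (Suc i)) - L * dist1 d x (m (Suc i))) ` {0..<n}"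
        unfolding y_def by (simp del: upt_Suc)
      also have "\<dots> = (\<lambda>z. f z - L * dist1 d x z) ` (m ` (Suc ` {0..<n}))"
        by (simp only: image_image)
      also have "Suc ` {0..<n} = {1..n}" by (auto simp: image_Suc_atLeastLessThan)
      finally show ?thesis using mimg by simp
    qed
    ultimately show ?thesis by simp
  qed
  have errx: "\<bar>f x - hd (realize \<Phi> x)\<bar> \<le> 2*L * dist1 d x z" if xD: "x \<in> D" and zM: "z \<in> M" for x z
  proof -
    let ?G = "\<lambda>z. f z - L * dist1 d x z"
    have fin: "finite (?G ` M)" "?G ` M \<noteq> {}" using M_fin Mne by auto
    have le: "?G w \<le> f x" if "w \<in> M" for w
      using lip xD that M_sub by (smt (verit) subsetD)
    have "Max (?G ` M) \<le> f x" using fin le by auto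
    moreover have "?G z \<le> Max (?G ` M)" using fin zM by auto
    moreover have "f x - f z \<le> L * dist1 d x z"
      using lip xD zM M_sub by (smt (verit) subsetD)
    ultimately show ?thesis unfolding realx[OF xD] by linarith
  qed
  have part3: "(SUP x\<in>D. ereal \<bar>f x - hd (realize \<Phi> x)\<bar>)
           \<le> ereal (2*L) * (SUP x\<in>D. INF y\<in>M. ereal (dist1 d x y))"
  proof (rule SUP_least)
    fix x assume xD: "x \<in> D"
    have fin: "finite ((\<lambda>y. dist1 d x y) ` M)" "(\<lambda>y. dist1 d x y) ` M \<noteq> {}" using M_fin Mne by auto
    obtain z0 where z0: "z0 \<in> M" "dist1 d x z0 = Min ((\<lambda>y. dist1 d x y) ` M)"
      using Min_in[OF fin] by auto
    have INF: "(INF y\<in>M. ereal (dist1 d x y)) = ereal (dist1 d x z0)"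
    proof (rule antisym)
      show "(INF y\<in>M. ereal (dist1 d x y)) \<le> ereal (dist1 d x z0)" using z0(1) by (rule INF_lower)
      show "ereal (dist1 d x z0) \<le> (INF y\<in>M. ereal (dist1 d x y))"
        using z0 fin by (auto intro!: INF_greatest)
    qed
    have "ereal \<bar>f x - hd (realize \<Phi> x)\<bar> \<le> ereal (2*L * dist1 d x z0)"
      using errx[OF xD z0(1)] by simp
    also have "\<dots> = ereal (2*L) * (INF y\<in>M. ereal (dist1 d x y))" by (simp add: INF)
    also have "\<dots> \<le> ereal (2*L) * (SUP x\<in>D. INF y\<in>M. ereal (dist1 d x y))"
      by (rule ereal_mult_left_mono) (use xD Lnn in \<open>auto intro: SUP_upper\<close>)
    finally show "ereal \<bar>f x - hd (realize \<Phi> x)\<bar> \<le> ereal (2*L) * (SUP x\<in>D. INF y\<in>M. ereal (dist1 d x y))" .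
  qed
  define B0 where "B0 = Max {1, L, Max (maxnorm ` M), 2 * Max ((\<lambda>z. \<bar>f z\<bar>) ` M)}"
  define F0 where "F0 = Max ((\<lambda>z. \<bar>f z\<bar>) ` M)"
  have B0: "1 \<le> B0" "L \<le> B0" "Max (maxnorm ` M) \<le> B0" "2 * F0 \<le> B0"
    unfolding B0_def F0_def by simp_all
  have Fb: "\<bar>f z\<bar> \<le> F0" if "z \<in> M" for z unfolding F0_def using M_fin that by auto
  have F0nn: "0 \<le> F0" using Fb[of "m 1"] mM[of 1] n2 by force
  have Nb: "\<bar>z!q\<bar> \<le> B0" if z: "z \<in> M" and q: "q < d" for z q
  proof -
    have "\<bar>z!q\<bar> \<le> maxnorm z" unfolding maxnorm_def
      using lenM[OF z] q by (intro Max_ge) auto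
    also have "maxnorm z \<le> Max (maxnorm ` M)" using M_fin z by auto
    finally show ?thesis using B0(3) by linarith
  qed
  have Mm: "Mm = mkm (2*n-1) (n*(2*d)) (\<lambda>i j. \<Sum>l<n. Af i l * Vf l j)"
    unfolding Mm_def V using n2 by (simp add: mat_mult_mkm)
  have entries: "\<bar>e\<bar> \<le> B0" if e: "e \<in> set (vectorize \<Phi>)" for e
  proof -
    have vec: "vectorize \<Phi> = concat U @ A @ concat Mm @ bb @ vectorize R"
      unfolding Phi by (simp add: vectorize_def)
    consider "e \<in> set (concat U)" | "e \<in> set A" | "e \<in> set (concat Mm)" | "e \<in> set bb" | "e \<in> set (vectorize R)"
      using e unfolding vec by auto
    then show ?thesis
    proof cases
      case 1
      then obtain i j where "e = W1e (i mod (2*d)) j" unfolding U by (blast dest: set_concat_mkm)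
      then have "\<bar>e\<bar> \<le> 1" by (simp add: W1e_def)
      then show ?thesis using B0(1) by linarith
    next
      case 2
      then obtain r where r: "r < n*(2*d)" "e = A!r" using Au by (auto simp: in_set_conv_nth)
      define t where "t = r mod (2*d)"
      define z where "z = m (Suc (r div (2*d)))"
      have t: "t < 2*d" unfolding t_def using dpos by simp
      have rd: "r div (2*d) < n" using r(1) by (simp add: less_mult_imp_div_less)
      have zM: "z \<in> M" unfolding z_def using rd by (intro mM) auto
      have "e = (if even t then -(z!(t div 2)) else z!(t div 2))"
        using r Au Bz_nth t unfolding t_def z_def by simp
      moreover have "t div 2 < d" using t by linarith
      ultimately show ?thesis using Nb[OF zM] by auto
    next
      case 3
      then obtain i j where e: "e = (\<Sum>l<n. Af i l * Vf l j)" unfolding Mm by (blast dest: set_concat_mkm)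
      have "\<bar>\<Sum>l<n. Af i l * Vf l j\<bar> \<le> L"
        by (rule sparse_bound) (auto simp: Af_abs Vf_def Lnn split: if_splits)
      then show ?thesis using e B0(2) by linarith
    next
      case 4
      then obtain i where i: "i < 2*n-1" "e = (\<Sum>k<n. Af i k * C!k)" unfolding bb by auto
      have e': "e = (if i = 0 then C!0 - C!1 else if odd i then C!((i+1) div 2) else - C!((i+1) div 2))"
        unfolding i(2) by (rule Af_sum[OF n2 i(1)])
      have Cb: "\<bar>C!k\<bar> \<le> F0" if "k < n" for k
        using that Cn Fb mM by (metis Suc_leI atLeastAtMost_iff le_add1 not_less_eq_eq plus_1_eq_Suc)
      have q: "(i+1) div 2 < n" using i(1) by linarith
      have "\<bar>e\<bar> \<le> 2 * F0"
      proof (cases "i = 0")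
        case True
        then have "\<bar>e\<bar> \<le> \<bar>C!0\<bar> + \<bar>C!1\<bar>" using e' by simp
        then show ?thesis using Cb[of 0] Cb[of 1] n2 by linarith
      next
        case False
        then have "\<bar>e\<bar> = \<bar>C!((i+1) div 2)\<bar>" using e' by auto
        then show ?thesis using Cb[OF q] F0nn by linarith
      qed
      then show ?thesis using B0(4) by linarith
    next
      case 5
      then show ?thesis using R(3) B0(1) by force
    qed
  qed
  have part2: "maxnorm (vectorize \<Phi>) \<le> Max {1, L, Max (maxnorm ` M), 2 * Max ((\<lambda>z. \<bar>f z\<bar>) ` M)}"
    unfolding B0_def[symmetric] maxnorm_def using entries B0(1) by auto
  show ?thesis using dims part2 part3 by blast
qed

end
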